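(* For every odd integer $q>1$ there exists a $q$-ary $2$-frameproof code of length $4$ and cardinality $2(q-1)^2+1$.
   Context: For $P\subseteq F^l$ over a finite alphabet $F$, $desc(P)=\{x\in F^l: \text{for every } i\in\{1,\ldots,l\} \text{ there is } y\in P \text{ with } x_i=y_i\}$. For an integer $c\geq 2$, a $c$-frameproof code of length $l$ is a subset $C\subseteq F^l$ with $desc(P)\cap C=P$ for every $P\subseteq C$ with $|P|\leq c$; it is $q$-ary if $|F|=q$. *)

theory Defs
  imports Main
begin

definition words :: "'a set \<Rightarrow> nat \<Rightarrow> 'a list set" where
  "words F l = {x. length x = l \<and> set x \<subseteq> F}"

definition desc :: "'a set \<Rightarrow> nat \<Rightarrow> 'a list set \<Rightarrow> 'a list set" where
  "desc F l P = {x \<in> words F l. \<forall>i<l. \<exists>y\<in>P. x ! i = y ! i}"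

definition frameproof :: "nat \<Rightarrow> 'a set \<Rightarrow> nat \<Rightarrow> 'a list set \<Rightarrow> bool" where
  "frameproof c F l C \<longleftrightarrow> C \<subseteq> words F l \<and>
     (\<forall>P. P \<subseteq> C \<and> card P \<le> c \<longrightarrow> desc F l P \<inter> C = P)"

end

theory Submission imports Defs begin


lemma small_dvd_eq:
  fixes N u v :: int
  assumes "0 \<le> u" "u < N" "0 \<le> v" "v < N" "N dvd (u - v)"
  shows "u = v"
proof (rule ccontr)
  assume "u \<noteq> v"
  then have "u - v \<noteq> 0" by simp
  from dvd_imp_le_int[OF this assms(5)] have "\<bar>N\<bar> \<le> \<bar>u - v\<bar>" .
  with assms show False by auto
qed

lemma half_dvd_eq:
  fixes N m u v :: int
  assumes "N = 2*m" "0 \<le> u" "u < m" "0 \<le> v" "v < m" "N dvd (2*u - 2*v)"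
  shows "u = v"
proof -
  have "2*m dvd 2*(u - v)" using assms by (simp add: right_diff_distrib)
  then obtain k where "2*(u - v) = 2*m*k" unfolding dvd_def by blast
  then have "u - v = m*k" by (simp add: mult.assoc)
  then have "m dvd (u - v)" by simp
  then show ?thesis using small_dvd_eq[of u m v] assms by simp
qed

lemma odd_not_dvd:
  fixes N t :: int
  assumes "even N" "N dvd (2*t+1)"
  shows False
proof -
  have "2 dvd N" using assms(1) by simp
  then have "2 dvd 2*t+1" using assms(2) by (rule dvd_trans)
  then show False by simp
qed

lemma fp_intro:
  assumes "C \<subseteq> words F l" "finite C" "0 < l"
    and cf: "\<And>x y z. x\<in>C \<Longrightarrow> y\<in>C \<Longrightarrow> z\<in>C \<Longrightarrow> y\<noteq>x \<Longrightarrow> z\<noteq>x \<Longrightarrow> (\<exists>i<l. x!i\<noteq>y!i \<and> x!i\<noteq>z!i)"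
  shows "frameproof 2 F l C"
  unfolding frameproof_def
proof (intro conjI allI impI)
  show "C \<subseteq> words F l" by fact
  fix P assume P: "P \<subseteq> C \<and> card P \<le> 2"
  then have fP: "finite P" using assms(2) finite_subset by blast
  show "desc F l P \<inter> C = P"
  proof
    show "P \<subseteq> desc F l P \<inter> C"
      using P assms(1) unfolding desc_def by blast
  next
    show "desc F l P \<inter> C \<subseteq> P"
    proof
      fix x assume x: "x \<in> desc F l P \<inter> C"
      show "x \<in> P"
      proof (rule ccontr)
        assume xP: "x \<notin> P"
        have d: "\<forall>i<l. \<exists>y\<in>P. x ! i = y ! i" using x unfolding desc_def by blast
        then obtain y where y: "y \<in> P" using assms(3) by blast
        have c0: "card P \<le> 2" using P by simp
        have "card (P - {y}) = card P - 1" using fP y by (simp add: card_Diff_singleton)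
        then have c1: "card (P - {y}) \<le> Suc 0" using c0 by linarith
        have "finite (P - {y})" using fP by simp
        then have all: "\<forall>a\<in>P-{y}. \<forall>b\<in>P-{y}. a = b" using c1 card_le_Suc0_iff_eq by blast
        obtain z where z: "z \<in> P" "P \<subseteq> {y, z}"
        proof (cases "P - {y} = {}")
          case True then show ?thesis using that y by blast
        next
          case False then obtain z where "z \<in> P - {y}" by blast
          then show ?thesis using that all by blast
        qed
        have "y \<in> C" "z \<in> C" "x \<in> C" using P y z x by auto
        moreover have "y \<noteq> x" "z \<noteq> x" using xP y z by auto
        ultimately obtain i where i: "i < l" "x!i \<noteq> y!i" "x!i \<noteq> z!i" using cf by blast
        from d i(1) obtain w where w: "w \<in> P" "x ! i = w ! i" by blast
        then have "w = y \<or> w = z" using z by blast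
        then show False using w i by auto
      qed
    qed
  qed
qed



definition wA :: "int \<Rightarrow> int \<Rightarrow> int \<Rightarrow> int list" where
  "wA N a h = (if h < N div 2 then [a, (a+h) mod N, (a+2*h) mod N, N]
               else [a, (a+h) mod N, N, (a-1-h) mod N])"

definition wB :: "int \<Rightarrow> int \<Rightarrow> int \<Rightarrow> int list" where
  "wB N c k = (if k < N div 2 then [(c+2*k+1) mod N, N, c, (c+k) mod N]
               else [N, (c-k) mod N, c, (c+k) mod N])"

definition cI :: "int \<Rightarrow> int list set" where
  "cI N = (\<lambda>(a,h). wA N a h) ` ({0..<N} \<times> {0..<N}) \<union> (\<lambda>(c,k). wB N c k) ` ({0..<N} \<times> {0..<N}) \<union> {[N,N,N,N]}"

lemma cI_cases:
  assumes "y \<in> cI N"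
  obtains (A) a h where "0\<le>a" "a<N" "0\<le>h" "h<N" "y = wA N a h"
        | (B) c k where "0\<le>c" "c<N" "0\<le>k" "k<N" "y = wB N c k"
        | (Z) "y = [N,N,N,N]"
  using assms unfolding cI_def by auto

lemma md: "(u::int) mod N = v mod N \<Longrightarrow> N dvd (u - v)"
  by (simp add: mod_eq_dvd_iff)

lemma ms1: "0 \<le> (a::int) \<Longrightarrow> a < N \<Longrightarrow> u mod N = a \<Longrightarrow> N dvd (u - a)"
proof -
  assume "0 \<le> a" "a < N" "u mod N = a"
  then have "u mod N = a mod N" by (simp add: mod_pos_pos_trivial)
  then show ?thesis by (rule md)
qed

lemma ms2: "0 \<le> (a::int) \<Longrightarrow> a < N \<Longrightarrow> a = u mod N \<Longrightarrow> N dvd (a - u)"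
proof -
  assume "0 \<le> a" "a < N" "a = u mod N"
  then have "a mod N = u mod N" by (simp add: mod_pos_pos_trivial)
  then show ?thesis by (rule md)
qed

lemma dE: "(N::int) dvd u \<Longrightarrow> N dvd v \<Longrightarrow> u - v = w \<Longrightarrow> N dvd w"
  using dvd_diff[of N u v] by simp

lemma dE1: "(N::int) dvd u \<Longrightarrow> u = w \<Longrightarrow> N dvd w"
  by simp

lemma test: "[a,b,c,d::int] ! 2 = c" "[a,b,c,d::int] ! 3 = d" "[a,b,c,d::int] ! 1 = b" by simp_all

lemma mneq: "0 < (N::int) \<Longrightarrow> u mod N \<noteq> N"  "0 < (N::int) \<Longrightarrow> N \<noteq> u mod N"
proof -
  assume "0 < N"
  then have "u mod N < N" by simp
  then show "u mod N \<noteq> N" by simp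
next
  assume "0 < N"
  then have "u mod N < N" by simp
  then show "N \<noteq> u mod N" by simp
qed

definition own :: "int \<Rightarrow> int list \<Rightarrow> nat \<Rightarrow> nat \<Rightarrow> nat \<Rightarrow> bool" where
  "own N x i j k \<longleftrightarrow> (\<forall>y\<in>cI N. (y!i = x!i \<and> y!j = x!j) \<or> (y!i = x!i \<and> y!k = x!k) \<or> (y!j = x!j \<and> y!k = x!k) \<longrightarrow> y = x)"

lemma ownA1:
  assumes ev: "even N" and N2: "2 \<le> N" and a: "0 \<le> a" "a < N" and h: "0 \<le> h" "h < N div 2"
  shows "own N (wA N a h) 0 1 2"
  unfolding own_def
proof (intro ballI impI)
  define m where "m = N div 2"
  have Nm: "N = 2*m" using ev m_def by simp
  have Np: "0 < N" using N2 by simp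
  have hm: "h < m" using h m_def by simp
  have xe: "wA N a h = [a, (a+h) mod N, (a+2*h) mod N, N]" using h by (simp add: wA_def)
  fix y assume y: "y \<in> cI N" and ag: "(y!0 = wA N a h!0 \<and> y!1 = wA N a h!1) \<or> (y!0 = wA N a h!0 \<and> y!2 = wA N a h!2) \<or> (y!1 = wA N a h!1 \<and> y!2 = wA N a h!2)"
  from y show "y = wA N a h"
  proof (cases rule: cI_cases)
    case (A a' h')
    show ?thesis
    proof (cases "h' < m")
      case True
      have ye: "y = [a', (a'+h') mod N, (a'+2*h') mod N, N]" using A True m_def by (simp add: wA_def)
      from ag have "h' = h \<and> a' = a"
      proof (elim disjE conjE)
        assume e0: "y!0 = wA N a h!0" and e1: "y!1 = wA N a h!1"
        have aa: "a' = a" using e0 ye xe by simp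
        have d: "N dvd (a'+h') - (a+h)" using e1 ye xe by (intro md) simp
        have "N dvd h' - h" by (rule dE1[OF d]) (simp add: aa)
        then have "h' = h" using small_dvd_eq[of h' N h] A h hm Nm by simp
        then show ?thesis using aa by simp
      next
        assume e0: "y!0 = wA N a h!0" and e2: "y!2 = wA N a h!2"
        have aa: "a' = a" using e0 ye xe by simp
        have d: "N dvd (a'+2*h') - (a+2*h)" using e2 ye xe by (intro md) simp
        have "N dvd 2*h' - 2*h" by (rule dE1[OF d]) (simp add: aa)
        then have "h' = h" using half_dvd_eq[OF Nm, of h' h] A h hm True by simp
        then show ?thesis using aa by simp
      next
        assume e1: "y!1 = wA N a h!1" and e2: "y!2 = wA N a h!2"
        have d1: "N dvd (a'+h') - (a+h)" using e1 ye xe by (intro md) simp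
        have d2: "N dvd (a'+2*h') - (a+2*h)" using e2 ye xe by (intro md) simp
        have "N dvd h' - h" by (rule dE[OF d2 d1]) (simp add: algebra_simps)
        then have hh: "h' = h" using small_dvd_eq[of h' N h] A h hm Nm by simp
        have "N dvd a' - a" by (rule dE1[OF d1]) (simp add: hh)
        then have "a' = a" using small_dvd_eq[of a' N a] A a by simp
        then show ?thesis using hh by simp
      qed
      then show ?thesis using ye xe by simp
    next
      case False
      have ye: "y = [a', (a'+h') mod N, N, (a'-1-h') mod N]" using A False m_def by (simp add: wA_def)
      have "y!2 \<noteq> wA N a h!2" using ye xe mneq[OF Np] by simp
      with ag have e0: "y!0 = wA N a h!0" and e1: "y!1 = wA N a h!1" by auto
      have aa: "a' = a" using e0 ye xe by simp
      have d: "N dvd (a'+h') - (a+h)" using e1 ye xe by (intro md) simp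
      have "N dvd h' - h" by (rule dE1[OF d]) (simp add: aa)
      then have "h' = h" using small_dvd_eq[of h' N h] A h hm Nm by simp
      then show ?thesis using False hm by simp
    qed
  next
    case (B c k)
    show ?thesis
    proof (cases "k < m")
      case True
      have ye: "y = [(c+2*k+1) mod N, N, c, (c+k) mod N]" using B True m_def by (simp add: wB_def)
      have "y!1 \<noteq> wA N a h!1" using ye xe mneq[OF Np] by simp
      with ag have e0: "y!0 = wA N a h!0" and e2: "y!2 = wA N a h!2" by auto
      have d1: "N dvd (c+2*k+1) - a" using e0 ye xe a by (intro ms1) simp_all
      have "c = (a+2*h) mod N" using e2 ye xe by simp
      then have d2: "N dvd c - (a+2*h)" using ms2[of c N] B by blast
      have "N dvd 2*(k+h)+1" by (rule dE[OF d1 d2]) (simp add: algebra_simps)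
      then show ?thesis using odd_not_dvd[OF ev] by blast
    next
      case False
      have ye: "y = [N, (c-k) mod N, c, (c+k) mod N]" using B False m_def by (simp add: wB_def)
      have "y!0 \<noteq> wA N a h!0" using ye xe a by simp
      with ag have e1: "y!1 = wA N a h!1" and e2: "y!2 = wA N a h!2" by auto
      have d1: "N dvd (c-k) - (a+h)" using e1 ye xe by (intro md) simp
      have "c = (a+2*h) mod N" using e2 ye xe by simp
      then have d2: "N dvd c - (a+2*h)" using ms2[of c N] B by blast
      have "N dvd k - h" by (rule dE[OF d2 d1]) (simp add: algebra_simps)
      then have "k = h" using small_dvd_eq[of k N h] B h hm Nm by simp
      then show ?thesis using False hm by simp
    qed
  next
    case Z
    then have "y!0 \<noteq> wA N a h!0" "y!1 \<noteq> wA N a h!1" using xe a mneq[OF Np] by simp_all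
    with ag show ?thesis by auto
  qed
qed


lemma ownA2:
  assumes ev: "even N" and N2: "2 \<le> N" and a: "0 \<le> a" "a < N" and h: "N div 2 \<le> h" "h < N"
  shows "own N (wA N a h) 0 1 3"
  unfolding own_def
proof (intro ballI impI)
  define m where "m = N div 2"
  have Nm: "N = 2*m" using ev m_def by simp
  have Np: "0 < N" using N2 by simp
  have hm: "m \<le> h" "0 \<le> h" using h m_def N2 by simp_all
  have xe: "wA N a h = [a, (a+h) mod N, N, (a-1-h) mod N]" using h by (simp add: wA_def)
  fix y assume y: "y \<in> cI N" and ag: "(y!0 = wA N a h!0 \<and> y!1 = wA N a h!1) \<or> (y!0 = wA N a h!0 \<and> y!3 = wA N a h!3) \<or> (y!1 = wA N a h!1 \<and> y!3 = wA N a h!3)"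
  from y show "y = wA N a h"
  proof (cases rule: cI_cases)
    case (A a' h')
    show ?thesis
    proof (cases "h' < m")
      case True
      have ye: "y = [a', (a'+h') mod N, (a'+2*h') mod N, N]" using A True m_def by (simp add: wA_def)
      have "y!3 \<noteq> wA N a h!3" using ye xe mneq[OF Np] by simp
      with ag have e0: "y!0 = wA N a h!0" and e1: "y!1 = wA N a h!1" by auto
      have aa: "a' = a" using e0 ye xe by simp
      have d: "N dvd (a'+h') - (a+h)" using e1 ye xe by (intro md) simp
      have "N dvd h' - h" by (rule dE1[OF d]) (simp add: aa)
      then have "h' = h" using small_dvd_eq[of h' N h] A h hm by simp
      then show ?thesis using True hm by simp
    next
      case False
      have ye: "y = [a', (a'+h') mod N, N, (a'-1-h') mod N]" using A False m_def by (simp add: wA_def)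
      from ag have "h' = h \<and> a' = a"
      proof (elim disjE conjE)
        assume e0: "y!0 = wA N a h!0" and e1: "y!1 = wA N a h!1"
        have aa: "a' = a" using e0 ye xe by simp
        have d: "N dvd (a'+h') - (a+h)" using e1 ye xe by (intro md) simp
        have "N dvd h' - h" by (rule dE1[OF d]) (simp add: aa)
        then have "h' = h" using small_dvd_eq[of h' N h] A h hm by simp
        then show ?thesis using aa by simp
      next
        assume e0: "y!0 = wA N a h!0" and e3: "y!3 = wA N a h!3"
        have aa: "a' = a" using e0 ye xe by simp
        have d: "N dvd (a'-1-h') - (a-1-h)" using e3 ye xe by (intro md) simp
        have "N dvd h - h'" by (rule dE1[OF d]) (simp add: aa)
        then have "h = h'" using small_dvd_eq[of h N h'] A h hm by simp
        then show ?thesis using aa by simp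
      next
        assume e1: "y!1 = wA N a h!1" and e3: "y!3 = wA N a h!3"
        have d1: "N dvd (a'+h') - (a+h)" using e1 ye xe by (intro md) simp
        have d3: "N dvd (a'-1-h') - (a-1-h)" using e3 ye xe by (intro md) simp
        have dd: "N dvd 2*(h'-m) - 2*(h-m)" by (rule dE[OF d1 d3]) (simp add: algebra_simps)
        have "h' - m = h - m" by (rule half_dvd_eq[OF Nm _ _ _ _ dd]) (use A h hm False Nm in linarith)+
        then have hh: "h' = h" by simp
        have "N dvd a' - a" by (rule dE1[OF d1]) (simp add: hh)
        then have "a' = a" using small_dvd_eq[of a' N a] A a by simp
        then show ?thesis using hh by simp
      qed
      then show ?thesis using ye xe by simp
    qed
  next
    case (B c k)
    show ?thesis
    proof (cases "k < m")
      case True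
      have ye: "y = [(c+2*k+1) mod N, N, c, (c+k) mod N]" using B True m_def by (simp add: wB_def)
      have "y!1 \<noteq> wA N a h!1" using ye xe mneq[OF Np] by simp
      with ag have e0: "y!0 = wA N a h!0" and e3: "y!3 = wA N a h!3" by auto
      have d1: "N dvd (c+2*k+1) - a" using e0 ye xe a by (intro ms1) simp_all
      have d3: "N dvd (c+k) - (a-1-h)" using e3 ye xe by (intro md) simp
      have "N dvd k - h" by (rule dE[OF d1 d3]) (simp add: algebra_simps)
      then have "k = h" using small_dvd_eq[of k N h] B h hm by simp
      then show ?thesis using True hm by simp
    next
      case False
      have ye: "y = [N, (c-k) mod N, c, (c+k) mod N]" using B False m_def by (simp add: wB_def)
      have "y!0 \<noteq> wA N a h!0" using ye xe a by simp
      with ag have e1: "y!1 = wA N a h!1" and e3: "y!3 = wA N a h!3" by auto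
      have d1: "N dvd (c-k) - (a+h)" using e1 ye xe by (intro md) simp
      have d3: "N dvd (c+k) - (a-1-h)" using e3 ye xe by (intro md) simp
      have "N dvd 2*(k+h)+1" by (rule dE[OF d3 d1]) (simp add: algebra_simps)
      then show ?thesis using odd_not_dvd[OF ev] by blast
    qed
  next
    case Z
    then have "y!0 \<noteq> wA N a h!0" "y!1 \<noteq> wA N a h!1" using xe a mneq[OF Np] by simp_all
    with ag show ?thesis by auto
  qed
qed

lemma ownB1:
  assumes ev: "even N" and N2: "2 \<le> N" and c: "0 \<le> c" "c < N" and k: "0 \<le> k" "k < N div 2"
  shows "own N (wB N c k) 0 2 3"
  unfolding own_def
proof (intro ballI impI)
  define m where "m = N div 2"
  have Nm: "N = 2*m" using ev m_def by simp
  have Np: "0 < N" using N2 by simp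
  have km: "k < m" using k m_def by simp
  have xe: "wB N c k = [(c+2*k+1) mod N, N, c, (c+k) mod N]" using k by (simp add: wB_def)
  fix y assume y: "y \<in> cI N" and ag: "(y!0 = wB N c k!0 \<and> y!2 = wB N c k!2) \<or> (y!0 = wB N c k!0 \<and> y!3 = wB N c k!3) \<or> (y!2 = wB N c k!2 \<and> y!3 = wB N c k!3)"
  from y show "y = wB N c k"
  proof (cases rule: cI_cases)
    case (A a h)
    show ?thesis
    proof (cases "h < m")
      case True
      have ye: "y = [a, (a+h) mod N, (a+2*h) mod N, N]" using A True m_def by (simp add: wA_def)
      have "y!3 \<noteq> wB N c k!3" using ye xe mneq[OF Np] by simp
      with ag have e0: "y!0 = wB N c k!0" and e2: "y!2 = wB N c k!2" by auto
      have "a = (c+2*k+1) mod N" using e0 ye xe by simp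
      then have d0: "N dvd a - (c+2*k+1)" using ms2[of a N] A by blast
      have d2: "N dvd (a+2*h) - c" using e2 ye xe c by (intro ms1) simp_all
      have "N dvd 2*(h+k)+1" by (rule dE[OF d2 d0]) (simp add: algebra_simps)
      then show ?thesis using odd_not_dvd[OF ev] by blast
    next
      case False
      have ye: "y = [a, (a+h) mod N, N, (a-1-h) mod N]" using A False m_def by (simp add: wA_def)
      have "y!2 \<noteq> wB N c k!2" using ye xe c by simp
      with ag have e0: "y!0 = wB N c k!0" and e3: "y!3 = wB N c k!3" by auto
      have "a = (c+2*k+1) mod N" using e0 ye xe by simp
      then have d0: "N dvd a - (c+2*k+1)" using ms2[of a N] A by blast
      have d3: "N dvd (a-1-h) - (c+k)" using e3 ye xe by (intro md) simp
      have "N dvd h - k" by (rule dE[OF d0 d3]) (simp add: algebra_simps)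
      then have "h = k" using small_dvd_eq[of h N k] A k km by simp
      then show ?thesis using False km by simp
    qed
  next
    case (B c' k')
    show ?thesis
    proof (cases "k' < m")
      case True
      have ye: "y = [(c'+2*k'+1) mod N, N, c', (c'+k') mod N]" using B True m_def by (simp add: wB_def)
      from ag have "k' = k \<and> c' = c"
      proof (elim disjE conjE)
        assume e0: "y!0 = wB N c k!0" and e2: "y!2 = wB N c k!2"
        have cc: "c' = c" using e2 ye xe by simp
        have d: "N dvd (c'+2*k'+1) - (c+2*k+1)" using e0 ye xe by (intro md) simp
        have "N dvd 2*k' - 2*k" by (rule dE1[OF d]) (simp add: cc)
        then have "k' = k" using half_dvd_eq[OF Nm, of k' k] B k km True by simp
        then show ?thesis using cc by simp
      next
        assume e0: "y!0 = wB N c k!0" and e3: "y!3 = wB N c k!3"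
        have d0: "N dvd (c'+2*k'+1) - (c+2*k+1)" using e0 ye xe by (intro md) simp
        have d3: "N dvd (c'+k') - (c+k)" using e3 ye xe by (intro md) simp
        have "N dvd k' - k" by (rule dE[OF d0 d3]) (simp add: algebra_simps)
        then have kk: "k' = k" using small_dvd_eq[of k' N k] B k km by simp
        have "N dvd c' - c" by (rule dE1[OF d3]) (simp add: kk)
        then have "c' = c" using small_dvd_eq[of c' N c] B c by simp
        then show ?thesis using kk by simp
      next
        assume e2: "y!2 = wB N c k!2" and e3: "y!3 = wB N c k!3"
        have cc: "c' = c" using e2 ye xe by simp
        have d: "N dvd (c'+k') - (c+k)" using e3 ye xe by (intro md) simp
        have "N dvd k' - k" by (rule dE1[OF d]) (simp add: cc)
        then have "k' = k" using small_dvd_eq[of k' N k] B k km by simp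
        then show ?thesis using cc by simp
      qed
      then show ?thesis using ye xe by simp
    next
      case False
      have ye: "y = [N, (c'-k') mod N, c', (c'+k') mod N]" using B False m_def by (simp add: wB_def)
      have "y!0 \<noteq> wB N c k!0" using ye xe mneq[OF Np] by simp
      with ag have e2: "y!2 = wB N c k!2" and e3: "y!3 = wB N c k!3" by auto
      have cc: "c' = c" using e2 ye xe by simp
      have d: "N dvd (c'+k') - (c+k)" using e3 ye xe by (intro md) simp
      have "N dvd k' - k" by (rule dE1[OF d]) (simp add: cc)
      then have "k' = k" using small_dvd_eq[of k' N k] B k km by simp
      then show ?thesis using False km by simp
    qed
  next
    case Z
    then have "y!2 \<noteq> wB N c k!2" "y!3 \<noteq> wB N c k!3" using xe c mneq[OF Np] by simp_all
    with ag show ?thesis by auto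
  qed
qed

lemma ownB2:
  assumes ev: "even N" and N2: "2 \<le> N" and c: "0 \<le> c" "c < N" and k: "N div 2 \<le> k" "k < N"
  shows "own N (wB N c k) 1 2 3"
  unfolding own_def
proof (intro ballI impI)
  define m where "m = N div 2"
  have Nm: "N = 2*m" using ev m_def by simp
  have Np: "0 < N" using N2 by simp
  have km: "m \<le> k" "0 \<le> k" using k m_def N2 by simp_all
  have xe: "wB N c k = [N, (c-k) mod N, c, (c+k) mod N]" using k by (simp add: wB_def)
  fix y assume y: "y \<in> cI N" and ag: "(y!1 = wB N c k!1 \<and> y!2 = wB N c k!2) \<or> (y!1 = wB N c k!1 \<and> y!3 = wB N c k!3) \<or> (y!2 = wB N c k!2 \<and> y!3 = wB N c k!3)"
  from y show "y = wB N c k"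
  proof (cases rule: cI_cases)
    case (A a h)
    show ?thesis
    proof (cases "h < m")
      case True
      have ye: "y = [a, (a+h) mod N, (a+2*h) mod N, N]" using A True m_def by (simp add: wA_def)
      have "y!3 \<noteq> wB N c k!3" using ye xe mneq[OF Np] by simp
      with ag have e1: "y!1 = wB N c k!1" and e2: "y!2 = wB N c k!2" by auto
      have d1: "N dvd (a+h) - (c-k)" using e1 ye xe by (intro md) simp
      have d2: "N dvd (a+2*h) - c" using e2 ye xe c by (intro ms1) simp_all
      have "N dvd h - k" by (rule dE[OF d2 d1]) (simp add: algebra_simps)
      then have "h = k" using small_dvd_eq[of h N k] A k km by simp
      then show ?thesis using True km by simp
    next
      case False
      have ye: "y = [a, (a+h) mod N, N, (a-1-h) mod N]" using A False m_def by (simp add: wA_def)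
      have "y!2 \<noteq> wB N c k!2" using ye xe c by simp
      with ag have e1: "y!1 = wB N c k!1" and e3: "y!3 = wB N c k!3" by auto
      have d1: "N dvd (a+h) - (c-k)" using e1 ye xe by (intro md) simp
      have d3: "N dvd (a-1-h) - (c+k)" using e3 ye xe by (intro md) simp
      have "N dvd 2*(h+k)+1" by (rule dE[OF d1 d3]) (simp add: algebra_simps)
      then show ?thesis using odd_not_dvd[OF ev] by blast
    qed
  next
    case (B c' k')
    show ?thesis
    proof (cases "k' < m")
      case True
      have ye: "y = [(c'+2*k'+1) mod N, N, c', (c'+k') mod N]" using B True m_def by (simp add: wB_def)
      have "y!1 \<noteq> wB N c k!1" using ye xe mneq[OF Np] by simp
      with ag have e2: "y!2 = wB N c k!2" and e3: "y!3 = wB N c k!3" by auto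
      have cc: "c' = c" using e2 ye xe by simp
      have d: "N dvd (c'+k') - (c+k)" using e3 ye xe by (intro md) simp
      have "N dvd k' - k" by (rule dE1[OF d]) (simp add: cc)
      then have "k' = k" using small_dvd_eq[of k' N k] B k km by simp
      then show ?thesis using True km by simp
    next
      case False
      have ye: "y = [N, (c'-k') mod N, c', (c'+k') mod N]" using B False m_def by (simp add: wB_def)
      from ag have "k' = k \<and> c' = c"
      proof (elim disjE conjE)
        assume e1: "y!1 = wB N c k!1" and e2: "y!2 = wB N c k!2"
        have cc: "c' = c" using e2 ye xe by simp
        have d: "N dvd (c'-k') - (c-k)" using e1 ye xe by (intro md) simp
        have "N dvd k - k'" by (rule dE1[OF d]) (simp add: cc)
        then have "k = k'" using small_dvd_eq[of k N k'] B k km by simp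
        then show ?thesis using cc by simp
      next
        assume e1: "y!1 = wB N c k!1" and e3: "y!3 = wB N c k!3"
        have d1: "N dvd (c'-k') - (c-k)" using e1 ye xe by (intro md) simp
        have d3: "N dvd (c'+k') - (c+k)" using e3 ye xe by (intro md) simp
        have dd: "N dvd 2*(k'-m) - 2*(k-m)" by (rule dE[OF d3 d1]) (simp add: algebra_simps)
        have "k' - m = k - m" by (rule half_dvd_eq[OF Nm _ _ _ _ dd]) (use B k km False Nm in linarith)+
        then have kk: "k' = k" by simp
        have "N dvd c' - c" by (rule dE1[OF d3]) (simp add: kk)
        then have "c' = c" using small_dvd_eq[of c' N c] B c by simp
        then show ?thesis using kk by simp
      next
        assume e2: "y!2 = wB N c k!2" and e3: "y!3 = wB N c k!3"
        have cc: "c' = c" using e2 ye xe by simp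
        have d: "N dvd (c'+k') - (c+k)" using e3 ye xe by (intro md) simp
        have "N dvd k' - k" by (rule dE1[OF d]) (simp add: cc)
        then have "k' = k" using small_dvd_eq[of k' N k] B k km by simp
        then show ?thesis using cc by simp
      qed
      then show ?thesis using ye xe by simp
    qed
  next
    case Z
    then have "y!1 \<noteq> wB N c k!1" "y!2 \<noteq> wB N c k!2" using xe c mneq[OF Np] by simp_all
    with ag show ?thesis by auto
  qed
qed

lemma ownZ:
  assumes N2: "2 \<le> N"
  shows "own N [N,N,N,N] 0 1 2"
  unfolding own_def
proof (intro ballI impI)
  have Np: "0 < N" using N2 by simp
  fix y assume y: "y \<in> cI N" and ag: "(y!0 = [N,N,N,N]!0 \<and> y!1 = [N,N,N,N]!1) \<or> (y!0 = [N,N,N,N]!0 \<and> y!2 = [N,N,N,N]!2) \<or> (y!1 = [N,N,N,N]!1 \<and> y!2 = [N,N,N,N]!2)"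
  from y show "y = [N,N,N,N]"
  proof (cases rule: cI_cases)
    case (A a h)
    then have "y!0 \<noteq> N" "y!1 \<noteq> N" using mneq[OF Np] by (auto simp: wA_def)
    with ag show ?thesis by auto
  next
    case (B c k)
    show ?thesis
    proof (cases "k < N div 2")
      case True
      then have "y!0 \<noteq> N" "y!2 \<noteq> N" using B mneq[OF Np] by (auto simp: wB_def)
      with ag show ?thesis by auto
    next
      case False
      then have "y!1 \<noteq> N" "y!2 \<noteq> N" using B mneq[OF Np] by (auto simp: wB_def)
      with ag show ?thesis by auto
    qed
  next
    case Z then show ?thesis by simp
  qed
qed

lemma own_exists:
  assumes ev: "even N" and N2: "2 \<le> N" and x: "x \<in> cI N"
  shows "\<exists>i j k. i < 4 \<and> j < 4 \<and> k < 4 \<and> own N x i j k"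
  using x
proof (cases rule: cI_cases)
  case (A a h)
  then show ?thesis
  proof (cases "h < N div 2")
    case True then show ?thesis using ownA1[OF ev N2, of a h] A by (intro exI[of _ 0] exI[of _ 1] exI[of _ 2]) simp
  next
    case False then show ?thesis using ownA2[OF ev N2, of a h] A by (intro exI[of _ 0] exI[of _ 1] exI[of _ 3]) simp
  qed
next
  case (B c k)
  then show ?thesis
  proof (cases "k < N div 2")
    case True then show ?thesis using ownB1[OF ev N2, of c k] B by (intro exI[of _ 0] exI[of _ 2] exI[of _ 3]) simp
  next
    case False then show ?thesis using ownB2[OF ev N2, of c k] B by (intro exI[of _ 1] exI[of _ 2] exI[of _ 3]) simp
  qed
next
  case Z then show ?thesis using ownZ[OF N2] by (intro exI[of _ 0] exI[of _ 1] exI[of _ 2]) simp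
qed

lemma pig: "P1 \<or> Q1 \<Longrightarrow> P2 \<or> Q2 \<Longrightarrow> P3 \<or> Q3 \<Longrightarrow> \<not> ((P1 \<and> P2) \<or> (P1 \<and> P3) \<or> (P2 \<and> P3)) \<Longrightarrow> \<not> ((Q1 \<and> Q2) \<or> (Q1 \<and> Q3) \<or> (Q2 \<and> Q3)) \<Longrightarrow> False"
  by blast

lemma cover_free:
  assumes ev: "even N" and N2: "2 \<le> N" and x: "x \<in> cI N" and y: "y \<in> cI N" and z: "z \<in> cI N"
    and yx: "y \<noteq> x" and zx: "z \<noteq> x"
  shows "\<exists>i<4. x!i \<noteq> y!i \<and> x!i \<noteq> z!i"
proof (rule ccontr)
  assume "\<not> ?thesis"
  then have cov: "\<And>i. i < 4 \<Longrightarrow> y!i = x!i \<or> z!i = x!i" by auto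
  obtain i j k where ijk: "i < 4" "j < 4" "k < 4" and o: "own N x i j k" using own_exists[OF ev N2 x] by blast
  have oy: "\<not> ((y!i = x!i \<and> y!j = x!j) \<or> (y!i = x!i \<and> y!k = x!k) \<or> (y!j = x!j \<and> y!k = x!k))"
    using o y yx unfolding own_def by blast
  have oz: "\<not> ((z!i = x!i \<and> z!j = x!j) \<or> (z!i = x!i \<and> z!k = x!k) \<or> (z!j = x!j \<and> z!k = x!k))"
    using o z zx unfolding own_def by blast
  show False by (rule pig[OF cov[OF ijk(1)] cov[OF ijk(2)] cov[OF ijk(3)] oy oz])
qed


lemma mb: "0 < (N::int) \<Longrightarrow> 0 \<le> u mod N" "0 < (N::int) \<Longrightarrow> u mod N \<le> N"
  by (simp_all add: less_imp_le)

lemma cI_range: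
  assumes Np: "0 < N" and x: "x \<in> cI N"
  shows "length x = 4 \<and> set x \<subseteq> {0..N}"
  using x
proof (cases rule: cI_cases)
  case (A a h) then show ?thesis using mb[OF Np] Np by (auto simp: wA_def)
next
  case (B c k) then show ?thesis using mb[OF Np] Np by (auto simp: wB_def)
next
  case Z then show ?thesis using Np by auto
qed

lemma cI_finite: "finite (cI N)"
  by (simp add: cI_def)

lemma wA_nth: "wA N a h ! 0 = a" "wA N a h ! 1 = (a+h) mod N" "wA N a h ! Suc 0 = (a+h) mod N"
  by (simp_all add: wA_def)

lemma wB_nth: "wB N c k ! 2 = c" "wB N c k ! 3 = (c+k) mod N"
  by (simp_all add: wB_def)

lemma card_cI:
  assumes ev: "even N" and N2: "2 \<le> N"
  shows "card (cI N) = 2 * (nat N)^2 + 1"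
proof -
  have Np: "0 < N" using N2 by simp
  define D where "D = {0..<N} \<times> {0..<N}"
  define SA where "SA = (\<lambda>(a,h). wA N a h) ` D"
  define SB where "SB = (\<lambda>(c,k). wB N c k) ` D"
  have cI_eq: "cI N = SA \<union> SB \<union> {[N,N,N,N]}" unfolding cI_def SA_def SB_def D_def by simp
  have injA: "inj_on (\<lambda>(a,h). wA N a h) D"
  proof (rule inj_onI, clarify)
    fix a h a' h' assume d: "(a,h) \<in> D" "(a',h') \<in> D" and e: "wA N a h = wA N a' h'"
    have aa: "a = a'" using arg_cong[OF e, of "\<lambda>x. x!0"] by (simp add: wA_nth)
    have "(a+h) mod N = (a'+h') mod N" using arg_cong[OF e, of "\<lambda>x. x!1"] by (simp add: wA_nth)
    then have "N dvd (a+h) - (a'+h')" by (rule md)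
    then have "N dvd h - h'" by (rule dE1) (simp add: aa)
    then have "h = h'" using small_dvd_eq[of h N h'] d unfolding D_def by auto
    then show "a = a' \<and> h = h'" using aa by simp
  qed
  have injB: "inj_on (\<lambda>(c,k). wB N c k) D"
  proof (rule inj_onI, clarify)
    fix c k c' k' assume d: "(c,k) \<in> D" "(c',k') \<in> D" and e: "wB N c k = wB N c' k'"
    have cc: "c = c'" using arg_cong[OF e, of "\<lambda>x. x!2"] by (simp add: wB_nth)
    have "(c+k) mod N = (c'+k') mod N" using arg_cong[OF e, of "\<lambda>x. x!3"] by (simp add: wB_nth)
    then have "N dvd (c+k) - (c'+k')" by (rule md)
    then have "N dvd k - k'" by (rule dE1) (simp add: cc)
    then have "k = k'" using small_dvd_eq[of k N k'] d unfolding D_def by auto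
    then show "c = c' \<and> k = k'" using cc by simp
  qed
  have cD: "card D = nat N * nat N" unfolding D_def by (simp add: card_cartesian_product)
  have cA: "card SA = nat N * nat N" unfolding SA_def using card_image[OF injA] cD by simp
  have cB: "card SB = nat N * nat N" unfolding SB_def using card_image[OF injB] cD by simp
  have SAp: "\<And>x. x \<in> SA \<Longrightarrow> x!0 < N \<and> x!1 < N"
    unfolding SA_def D_def using Np by (auto simp: wA_nth)
  have SBp: "\<And>x. x \<in> SB \<Longrightarrow> (x!0 = N \<or> x!1 = N) \<and> x!2 < N"
    unfolding SB_def D_def by (auto simp: wB_def)
  have disj1: "SA \<inter> SB = {}" using SAp SBp by fastforce
  have disj2: "(SA \<union> SB) \<inter> {[N,N,N,N]} = {}" using SAp SBp by fastforce
  have fA: "finite SA" "finite SB" unfolding SA_def SB_def D_def by simp_all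
  have "card (cI N) = card (SA \<union> SB) + 1"
    unfolding cI_eq using card_Un_disjoint[OF _ _ disj2] fA by simp
  also have "\<dots> = card SA + card SB + 1" using card_Un_disjoint[OF fA disj1] by simp
  finally show ?thesis using cA cB by (simp add: power2_eq_square)
qed

lemma nat_inj: "inj_on nat {x::int. 0 \<le> x}"
  by (rule inj_onI) simp

theorem theorem2:
  fixes q :: nat
  assumes "odd q" and "q > 1"
  shows "\<exists>(F :: nat set) C. finite F \<and> card F = q \<and> frameproof 2 F 4 C \<and>
           card C = 2 * (q - 1)^2 + 1"
proof -
  obtain t where qt: "q = 2*t+1" using assms(1) oddE by blast
  define N where "N = int q - 1"
  have NN: "N = 2 * int t" using qt N_def by simp
  have ev: "even N" using NN by simp
  have N2: "2 \<le> N" using NN qt assms(2) by simp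
  have Np: "0 < N" using N2 by simp
  have nN: "nat N = q - 1" using NN qt by (simp add: nat_mult_distrib)
  define C where "C = map nat ` cI N"
  have injC: "inj_on (map nat) (cI N)"
  proof (rule inj_onI)
    fix x y assume x: "x \<in> cI N" and y: "y \<in> cI N" and e: "map nat x = map nat y"
    have "set x \<union> set y \<subseteq> {u. 0 \<le> u}" using cI_range[OF Np x] cI_range[OF Np y] by auto
    then have "inj_on nat (set x \<union> set y)" using inj_on_subset[OF nat_inj] by blast
    then show "x = y" using map_inj_on[OF e] by blast
  qed
  have sub: "C \<subseteq> words {0..<q} 4"
  proof
    fix x assume "x \<in> C"
    then obtain x' where x': "x' \<in> cI N" "x = map nat x'" unfolding C_def by blast
    have r: "length x' = 4" "set x' \<subseteq> {0..N}" using cI_range[OF Np x'(1)] by auto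
    have "set x \<subseteq> {0..<q}"
    proof
      fix e assume "e \<in> set x"
      then obtain u where u: "u \<in> set x'" "e = nat u" using x'(2) by auto
      then have u0: "0 \<le> u" "u \<le> N" using r by auto
      then have "u < int q" using N_def by simp
      then show "e \<in> {0..<q}" using u u0 by (simp add: nat_less_iff)
    qed
    then show "x \<in> words {0..<q} 4" using r x'(2) unfolding words_def by simp
  qed
  have fin: "finite C" unfolding C_def using cI_finite by simp
  have fp: "frameproof 2 {0..<q} 4 C"
  proof (rule fp_intro[OF sub fin])
    show "(0::nat) < 4" by simp
  next
    fix x y z assume xyz: "x \<in> C" "y \<in> C" "z \<in> C" "y \<noteq> x" "z \<noteq> x"
    obtain x' where x': "x' \<in> cI N" "x = map nat x'" using xyz(1) unfolding C_def by blast
    obtain y' where y': "y' \<in> cI N" "y = map nat y'" using xyz(2) unfolding C_def by blast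
    obtain z' where z': "z' \<in> cI N" "z = map nat z'" using xyz(3) unfolding C_def by blast
    have "y' \<noteq> x'" "z' \<noteq> x'" using xyz x' y' z' by auto
    then obtain i where i: "i < 4" "x'!i \<noteq> y'!i" "x'!i \<noteq> z'!i"
      using cover_free[OF ev N2 x'(1) y'(1) z'(1)] by blast
    have rx: "length x' = 4" "set x' \<subseteq> {0..N}" using cI_range[OF Np x'(1)] by auto
    have ry: "length y' = 4" "set y' \<subseteq> {0..N}" using cI_range[OF Np y'(1)] by auto
    have rz: "length z' = 4" "set z' \<subseteq> {0..N}" using cI_range[OF Np z'(1)] by auto
    have "x'!i \<in> set x'" "y'!i \<in> set y'" "z'!i \<in> set z'" using rx ry rz i by simp_all
    then have nx: "0 \<le> x'!i" and ny: "0 \<le> y'!i" and nz: "0 \<le> z'!i" using rx ry rz by auto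
    have "x!i \<noteq> y!i" using i nx ny rx ry x' y' by (simp add: eq_nat_nat_iff)
    moreover have "x!i \<noteq> z!i" using i nx nz rx rz x' z' by (simp add: eq_nat_nat_iff)
    ultimately show "\<exists>i<4. x!i \<noteq> y!i \<and> x!i \<noteq> z!i" using i by blast
  qed
  have cC: "card C = 2 * (q - 1)^2 + 1"
    unfolding C_def using card_image[OF injC] card_cI[OF ev N2] nN by simp
  show ?thesis using fp cC by (intro exI[of _ "{0..<q}"] exI[of _ C]) simp
qed

end
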